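(* Let $G\in\Gamma_0(\mathbb{R}^n)$ be partly smooth at $x^\star$ relative to an affine or linear manifold $\mathcal{M}_G$ (so $\mathcal{M}_G = x^\star + T$ with $T\eqdef T^G_{x^\star}$), and let $\widetilde{G}$ be a $C^2$ smooth representative of $G$ on $\mathcal{M}_G$ near $x^\star$. For $h\in\mathbb{R}^n$ let $x^\star_h \eqdef x^\star + P_{T} h$. Then, as $h\to 0$, \[ e_G^{x^\star_h} = e_G^{x^\star} + P_{T}\nabla^2\widetilde{G}(x^\star) P_{T} h + o(h), \] and moreover, for every $h\in\mathbb{R}^n$, \[ \big\langle P_{T}\nabla^2\widetilde{G}(x^\star)P_{T} h,\, h\big\rangle \geq 0 . \]
   Context: $\Gamma_0(\mathbb{R}^n)$: proper lsc convex functions. For $x$ with $\partial G(x)\neq\emptyset$, $T^G_x\eqdef \mathrm{Lin}(\partial G(x))^\perp$ ($\mathrm{Lin}(C)$ the subspace parallel to the affine hull of $C$) and $e_G^x \eqdef P_{T^G_x}(\partial G(x))$ (a singleton). $G$ is partly smooth at $x$ relative to $\mathcal{M}\ni x$ if $\mathcal{M}$ is a $C^2$-manifold around $x$ with $G|_{\mathcal{M}}$ $C^2$ near $x$, the tangent space of $\mathcal{M}$ at $x$ is $T^G_x$, and $\partial G$ is continuous at $x$ relative to $\mathcal{M}$. A $C^2$ smooth representative $\widetilde G$ is a $C^2$ function on a neighbourhood of $x^\star$ agreeing with $G$ on $\mathcal{M}_G$; $\nabla^2\widetilde G$ is its Euclidean Hessian. $P_T$ is the orthogonal projector onto $T$.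 *)

theory Defs
  imports "HOL-Analysis.Analysis" "HOL-Library.Extended_Real"
begin

definition epigraph_e :: "('a::euclidean_space \<Rightarrow> ereal) \<Rightarrow> ('a \<times> real) set" where
  "epigraph_e G = {(x, r). G x \<le> ereal r}"

definition Gamma0 :: "('a::euclidean_space \<Rightarrow> ereal) \<Rightarrow> bool" where
  "Gamma0 G \<longleftrightarrow> (\<forall>x. G x \<noteq> -\<infinity>) \<and> (\<exists>x. G x \<noteq> \<infinity>)
      \<and> convex (epigraph_e G) \<and> closed (epigraph_e G)"

text \<open>Convex subdifferential (empty outside the domain).\<close>
definition subdiff :: "('a::euclidean_space \<Rightarrow> ereal) \<Rightarrow> 'a \<Rightarrow> 'a set" where
  "subdiff G x = {v. \<bar>G x\<bar> \<noteq> \<infinity> \<and> (\<forall>y. G x + ereal (v \<bullet> (y - x)) \<le> G y)}"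

text \<open>Lin(C): the subspace parallel to the affine hull of C.\<close>
definition Lin :: "'a::euclidean_space set \<Rightarrow> 'a set" where
  "Lin C = span {a - b | a b. a \<in> C \<and> b \<in> C}"

definition Tmodel :: "('a::euclidean_space \<Rightarrow> ereal) \<Rightarrow> 'a \<Rightarrow> 'a set" where
  "Tmodel G x = orthogonal_comp (Lin (subdiff G x))"

definition proj :: "'a::euclidean_space set \<Rightarrow> 'a \<Rightarrow> 'a" where
  "proj T v = closest_point T v"

definition eG :: "('a::euclidean_space \<Rightarrow> ereal) \<Rightarrow> 'a \<Rightarrow> 'a" where
  "eG G x = (THE e. proj (Tmodel G x) ` subdiff G x = {e})"

definition C2_on :: "'a::euclidean_space set \<Rightarrow> ('a \<Rightarrow> real) \<Rightarrow> ('a \<Rightarrow> 'a)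
                      \<Rightarrow> ('a \<Rightarrow> ('a \<Rightarrow>\<^sub>L 'a)) \<Rightarrow> bool" where
  "C2_on U f g H \<longleftrightarrow> open U
     \<and> (\<forall>y\<in>U. (f has_derivative (\<lambda>v. g y \<bullet> v)) (at y))
     \<and> (\<forall>y\<in>U. (g has_derivative blinfun_apply (H y)) (at y))
     \<and> continuous_on U H"

definition smooth_rep :: "('a::euclidean_space \<Rightarrow> ereal) \<Rightarrow> 'a set \<Rightarrow> 'a \<Rightarrow> 'a set
      \<Rightarrow> ('a \<Rightarrow> real) \<Rightarrow> ('a \<Rightarrow> 'a) \<Rightarrow> ('a \<Rightarrow> ('a \<Rightarrow>\<^sub>L 'a)) \<Rightarrow> bool" where
  "smooth_rep G M x U f g H \<longleftrightarrow> x \<in> U \<and> C2_on U f g H \<and> (\<forall>y\<in>M \<inter> U. G y = ereal (f y))"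

text \<open>Continuity of \<partial>G at x relative to M (Painleve-Kuratowski):
  outer limit \<subseteq> \<partial>G(x) \<subseteq> inner limit.\<close>
definition subdiff_cont_rel :: "('a::euclidean_space \<Rightarrow> ereal) \<Rightarrow> 'a \<Rightarrow> 'a set \<Rightarrow> bool" where
  "subdiff_cont_rel G x M \<longleftrightarrow>
     (\<forall>v\<in>subdiff G x. \<forall>\<epsilon>>0. \<exists>\<delta>>0. \<forall>y\<in>M. dist y x < \<delta> \<longrightarrow> (\<exists>w\<in>subdiff G y. dist w v < \<epsilon>))
   \<and> (\<forall>v. (\<forall>\<epsilon>>0. \<forall>\<delta>>0. \<exists>y\<in>M. dist y x < \<delta> \<and> (\<exists>w\<in>subdiff G y. dist w v < \<epsilon>))
            \<longrightarrow> v \<in> subdiff G x)"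

text \<open>Partial smoothness at x relative to an affine manifold M.  An affine set
  is a C^2 manifold whose tangent space at x is the parallel subspace {y - x | y \<in> M}.\<close>
definition partly_smooth_affine :: "('a::euclidean_space \<Rightarrow> ereal) \<Rightarrow> 'a \<Rightarrow> 'a set \<Rightarrow> bool" where
  "partly_smooth_affine G x M \<longleftrightarrow>
     subdiff G x \<noteq> {} \<and> affine M \<and> x \<in> M
   \<and> (\<exists>U f g H. smooth_rep G M x U f g H)
   \<and> (\<lambda>y. y - x) ` M = Tmodel G x
   \<and> subdiff_cont_rel G x M"

end

theory Submission
  imports Defs
begin

lemma proj_char:
  fixes S :: "'a::euclidean_space set"
  assumes "subspace S" "p \<in> S" "\<forall>t\<in>S. (v - p) \<bullet> t = 0"
  shows "proj S v = p"
proof -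
  have "\<forall>z\<in>S. dist v p \<le> dist v z"
  proof
    fix z assume z: "z \<in> S"
    have "p - z \<in> S" using assms(1,2) z by (simp add: subspace_diff)
    then have o: "(v - p) \<bullet> (p - z) = 0" using assms(3) by blast
    have "(norm ((v - p) + (p - z)))^2 = (norm (v-p))^2 + (norm (p - z))^2"
      using o by (intro norm_add_Pythagorean) (simp add: orthogonal_def)
    then have "(norm (v - p))^2 \<le> (norm (v - z))^2" by simp
    then have "norm (v - p) \<le> norm (v - z)"
      by (rule power2_le_imp_le) simp
    then show "dist v p \<le> dist v z" by (simp add: dist_norm)
  qed
  then have "p = closest_point S v"
    by (intro closest_point_unique) (simp_all add: assms subspace_imp_convex closed_subspace)
  then show ?thesis unfolding proj_def by simp
qed

lemma proj_decomp:
  fixes S :: "'a::euclidean_space set"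
  assumes "subspace S"
  shows "proj S v \<in> S \<and> (\<forall>t\<in>S. (v - proj S v) \<bullet> t = 0)"
proof -
  have "v \<in> S + S\<^sup>\<bottom>" using subspace_sum_orthogonal_comp[OF assms] by simp
  then obtain a b where ab: "v = a + b" "a \<in> S" "b \<in> S\<^sup>\<bottom>"
    by (rule set_plus_elim)
  have bo: "\<forall>t\<in>S. b \<bullet> t = 0" using ab(3) by (auto simp: orthogonal_comp_def orthogonal_def inner_commute)
  have "proj S v = a" using proj_char[OF assms ab(2)] ab(1) bo by simp
  then show ?thesis using ab bo by simp
qed

lemma proj_in: "subspace S \<Longrightarrow> proj S v \<in> S"
  using proj_decomp by blast
lemma proj_orth: "subspace S \<Longrightarrow> t \<in> S \<Longrightarrow> (v - proj S v) \<bullet> t = 0"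
  using proj_decomp by blast

lemma proj_diff:
  assumes "subspace S"
  shows "proj S (u - v) = proj S u - proj S v"
proof (rule proj_char[OF assms])
  show "proj S u - proj S v \<in> S" using proj_in[OF assms] subspace_diff[OF assms] by blast
  show "\<forall>t\<in>S. (u - v - (proj S u - proj S v)) \<bullet> t = 0"
  proof
    fix t assume t: "t \<in> S"
    have "u - v - (proj S u - proj S v) = (u - proj S u) - (v - proj S v)" by simp
    then have "(u - v - (proj S u - proj S v)) \<bullet> t = (u - proj S u) \<bullet> t - (v - proj S v) \<bullet> t"
      by (simp only: inner_diff_left)
    then show "(u - v - (proj S u - proj S v)) \<bullet> t = 0" using proj_orth[OF assms t] by simp
  qed
qed

lemma proj_orth_zero:
  assumes "subspace S" "\<forall>t\<in>S. w \<bullet> t = 0"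
  shows "proj S w = 0"
  by (rule proj_char[OF assms(1)]) (use assms subspace_0 in simp_all)

lemma proj_norm_le:
  assumes "subspace S"
  shows "norm (proj S v) \<le> norm v"
proof -
  have "(proj S v) \<bullet> (v - proj S v) = 0" using proj_orth[OF assms proj_in[OF assms]]
    by (simp add: inner_commute)
  then have "(norm (proj S v + (v - proj S v)))^2 = (norm (proj S v))^2 + (norm (v - proj S v))^2"
    by (intro norm_add_Pythagorean) (simp add: orthogonal_def)
  then have "(norm (proj S v))^2 \<le> (norm v)^2" by simp
  then show ?thesis by (rule power2_le_imp_le) simp
qed

lemma proj_sym:
  assumes "subspace S"
  shows "proj S x \<bullet> h = x \<bullet> proj S h"
proof -
  have "proj S x \<bullet> h = proj S x \<bullet> proj S h + proj S x \<bullet> (h - proj S h)"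
    by (simp add: inner_diff_right)
  also have "proj S x \<bullet> (h - proj S h) = 0"
    using proj_orth[OF assms proj_in[OF assms]] by (simp add: inner_commute)
  also have "x \<bullet> proj S h = proj S x \<bullet> proj S h + (x - proj S x) \<bullet> proj S h"
    by (simp add: inner_diff_left)
  moreover have "(x - proj S x) \<bullet> proj S h = 0"
    using proj_orth[OF assms proj_in[OF assms]] by simp
  ultimately show ?thesis by simp
qed

lemma subgrad_tangent:
  fixes G :: "'a::euclidean_space \<Rightarrow> ereal"
  assumes T: "subspace T" and MT: "\<And>y. y \<in> M \<longleftrightarrow> y - xs \<in> T"
    and U: "open U" and der: "\<And>y. y \<in> U \<Longrightarrow> (Gt has_derivative (\<lambda>v. g y \<bullet> v)) (at y)"
    and eq: "\<And>y. y \<in> M \<Longrightarrow> y \<in> U \<Longrightarrow> G y = ereal (Gt y)"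
    and y: "y \<in> M" "y \<in> U" and v: "v \<in> subdiff G y" and t: "t \<in> T"
  shows "(v - g y) \<bullet> t = 0"
proof -
  obtain d' where d': "d' > 0" "ball y d' \<subseteq> U" using U y(2) open_contains_ball by blast
  define f where "f s = Gt (y + s *\<^sub>R t) - s * (v \<bullet> t)" for s
  have d1: "((\<lambda>s. y + s *\<^sub>R t) has_derivative (\<lambda>s. s *\<^sub>R t)) (at 0)"
    by (auto intro!: derivative_eq_intros)
  have d2: "(Gt has_derivative (\<lambda>w. g y \<bullet> w)) (at ((\<lambda>s. y + s *\<^sub>R t) 0))"
    using der[OF y(2)] by simp
  have d3: "((\<lambda>s. Gt (y + s *\<^sub>R t)) has_derivative (\<lambda>s. g y \<bullet> (s *\<^sub>R t))) (at 0)"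
    using diff_chain_at[OF d1 d2] by (simp add: o_def)
  have d4: "(f has_derivative (\<lambda>s. g y \<bullet> (s *\<^sub>R t) - s * (v \<bullet> t))) (at 0)"
    unfolding f_def by (intro has_derivative_diff d3) (auto intro!: derivative_eq_intros)
  have "(\<lambda>s. g y \<bullet> (s *\<^sub>R t) - s * (v \<bullet> t)) = (*) (g y \<bullet> t - v \<bullet> t)"
    by (auto simp: algebra_simps)
  then have d5: "(f has_real_derivative (g y \<bullet> t - v \<bullet> t)) (at 0)"
    using d4 by (simp add: has_field_derivative_def)
  define d where "d = d' / (norm t + 1)"
  have dpos: "d > 0" unfolding d_def using d'(1) by (intro divide_pos_pos) (auto intro: add_nonneg_pos)
  have "\<forall>s. \<bar>0 - s\<bar> < d \<longrightarrow> f 0 \<le> f s"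
  proof (intro allI impI)
    fix s :: real assume s: "\<bar>0 - s\<bar> < d"
    have "norm (s *\<^sub>R t) = \<bar>s\<bar> * norm t" by simp
    also have "\<dots> \<le> \<bar>s\<bar> * (norm t + 1)" by (simp add: mult_left_mono)
    also have "\<dots> < d * (norm t + 1)" using s by (intro mult_strict_right_mono) (auto intro: add_nonneg_pos)
    also have "\<dots> = d'" unfolding d_def by (smt (verit) norm_ge_zero nonzero_eq_divide_eq)
    finally have "y + s *\<^sub>R t \<in> ball y d'" by (simp add: dist_norm)
    then have yU: "y + s *\<^sub>R t \<in> U" using d' by blast
    have "(y + s *\<^sub>R t) - xs = (y - xs) + s *\<^sub>R t" by simp
    also have "\<dots> \<in> T" using MT[of y] y t T by (simp add: subspace_add subspace_scale)
    finally have yM: "y + s *\<^sub>R t \<in> M" using MT by blast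
    have "G y + ereal (v \<bullet> ((y + s *\<^sub>R t) - y)) \<le> G (y + s *\<^sub>R t)"
      using v unfolding subdiff_def by blast
    then have "ereal (Gt y) + ereal (s * (v \<bullet> t)) \<le> ereal (Gt (y + s *\<^sub>R t))"
      using eq[OF y] eq[OF yM yU] by simp
    then have "Gt y + s * (v \<bullet> t) \<le> Gt (y + s *\<^sub>R t)" by simp
    then show "f 0 \<le> f s" by (simp add: f_def)
  qed
  then have "g y \<bullet> t - v \<bullet> t = 0" using DERIV_local_min[OF d5 dpos] by blast
  then show ?thesis by (simp add: inner_diff_left)
qed

lemma perturb:
  fixes S0 :: "'a::euclidean_space set" and Sf :: "'b \<Rightarrow> 'a set"
  assumes inner: "\<And>v e. v \<in> S0 \<Longrightarrow> e > 0 \<Longrightarrow> eventually (\<lambda>y. \<exists>w\<in>Sf y. dist w v < e) F"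
  shows "eventually (\<lambda>y. \<forall>w\<in>Lin S0. (\<forall>a\<in>Sf y. \<forall>b\<in>Sf y. w \<bullet> (a - b) = 0) \<longrightarrow> w = 0) F"
proof -
  define D0 where "D0 = {a - b | a b. a \<in> S0 \<and> b \<in> S0}"
  obtain B where B: "B \<subseteq> D0" "independent B" "D0 \<subseteq> span B"
    using maximal_independent_subset by blast
  have finB: "finite B" using B(2) independent_imp_finite by blast
  have LB: "Lin S0 = span B"
    unfolding Lin_def D0_def[symmetric]
    using B span_mono[OF B(1)] span_minimal[OF B(3) subspace_span] by blast
  define K where "K = span B \<inter> sphere 0 1"
  have unitK: "w /\<^sub>R norm w \<in> K" if "w \<in> span B" "w \<noteq> 0" for w
  proof -
    have "w /\<^sub>R norm w \<in> span B" using that(1) by (simp add: span_scale)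
    moreover have "norm (w /\<^sub>R norm w) = 1" using that(2) by simp
    ultimately show ?thesis by (simp add: K_def)
  qed
  show ?thesis
  proof (cases "K = {}")
    case True
    show ?thesis
    proof (rule always_eventually, intro allI ballI impI)
      fix y w assume w: "w \<in> Lin S0"
      show "w = 0"
      proof (rule ccontr)
        assume "w \<noteq> 0"
        then have "w /\<^sub>R norm w \<in> K" using unitK w LB by blast
        then show False using True by blast
      qed
    qed
  next
    case False
    define q where "q u = (\<Sum>d\<in>B. \<bar>u \<bullet> d\<bar>)" for u
    have cK: "compact K" unfolding K_def
      by (intro closed_Int_compact closed_subspace subspace_span compact_sphere)
    have cq: "continuous_on K q" unfolding q_def by (intro continuous_intros)
    obtain u0 where u0: "u0 \<in> K" "\<And>u. u \<in> K \<Longrightarrow> q u0 \<le> q u"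
      using continuous_attains_inf[OF cK False cq] by blast
    define m where "m = q u0"
    have mpos: "m > 0"
    proof (rule ccontr)
      assume "\<not> m > 0"
      then have "q u0 = 0" unfolding m_def q_def by (smt (verit) abs_ge_zero sum_nonneg)
      then have "\<forall>d\<in>B. \<bar>u0 \<bullet> d\<bar> = 0" unfolding q_def using finB
        by (subst sum_nonneg_eq_0_iff[symmetric]) auto
      then have "\<And>d. d \<in> B \<Longrightarrow> orthogonal u0 d" by (simp add: orthogonal_def)
      moreover have "u0 \<in> span B" using u0(1) K_def by blast
      ultimately have "orthogonal u0 u0" by (rule orthogonal_to_span[rotated])
      then have "u0 = 0" by (simp add: orthogonal_def)
      then show False using u0(1) by (simp add: K_def)
    qed
    have Bne: "B \<noteq> {}" using mpos by (auto simp: m_def q_def)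
    define e where "e = m / (2 * card B)"
    have cardpos: "card B > 0" using Bne finB by (simp add: card_gt_0_iff)
    have epos: "e > 0" using mpos cardpos by (simp add: e_def)
    have each: "eventually (\<lambda>y. \<exists>a'\<in>Sf y. \<exists>b'\<in>Sf y. norm (d - (a' - b')) < e) F" if dB: "d \<in> B" for d
    proof -
      obtain a b where ab: "a \<in> S0" "b \<in> S0" "d = a - b" using dB B(1) D0_def by blast
      have "eventually (\<lambda>y. (\<exists>w\<in>Sf y. dist w a < e/2) \<and> (\<exists>w\<in>Sf y. dist w b < e/2)) F"
        using epos by (intro eventually_conj inner[OF ab(1)] inner[OF ab(2)]) auto
      then show ?thesis
      proof (rule eventually_mono)
        fix y assume "(\<exists>w\<in>Sf y. dist w a < e/2) \<and> (\<exists>w\<in>Sf y. dist w b < e/2)"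
        then obtain a' b' where a'b': "a' \<in> Sf y" "b' \<in> Sf y" "dist a' a < e/2" "dist b' b < e/2" by blast
        have "d - (a' - b') = (a - a') - (b - b')" using ab(3) by (simp add: algebra_simps)
        then have "norm (d - (a' - b')) = norm ((a - a') - (b - b'))" by (rule arg_cong[of _ _ norm])
        also have "\<dots> \<le> norm (a - a') + norm (b - b')" by (rule norm_triangle_ineq4)
        also have "\<dots> < e" using a'b'(3,4) by (simp add: dist_norm norm_minus_commute)
        finally show "\<exists>a'\<in>Sf y. \<exists>b'\<in>Sf y. norm (d - (a' - b')) < e" using a'b' by blast
      qed
    qed
    have "eventually (\<lambda>y. \<forall>d\<in>B. \<exists>a'\<in>Sf y. \<exists>b'\<in>Sf y. norm (d - (a' - b')) < e) F"
      by (rule eventually_ball_finite[OF finB]) (intro ballI each)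
    then show ?thesis
    proof (rule eventually_mono)
      fix y assume H: "\<forall>d\<in>B. \<exists>a'\<in>Sf y. \<exists>b'\<in>Sf y. norm (d - (a' - b')) < e"
      show "\<forall>w\<in>Lin S0. (\<forall>a\<in>Sf y. \<forall>b\<in>Sf y. w \<bullet> (a - b) = 0) \<longrightarrow> w = 0"
      proof (intro ballI impI, rule ccontr)
        fix w assume w: "w \<in> Lin S0" "\<forall>a\<in>Sf y. \<forall>b\<in>Sf y. w \<bullet> (a - b) = 0" "w \<noteq> 0"
        define u where "u = w /\<^sub>R norm w"
        have uK: "u \<in> K" using unitK w LB by (simp add: u_def)
        have nu: "norm u = 1" using w(3) by (simp add: u_def)
        have "\<bar>u \<bullet> d\<bar> < e" if dB: "d \<in> B" for d
        proof -
          obtain a' b' where a'b': "a' \<in> Sf y" "b' \<in> Sf y" "norm (d - (a' - b')) < e" using H dB by blast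
          have "u \<bullet> (a' - b') = 0" using w(2) a'b' by (simp add: u_def)
          then have "u \<bullet> d = u \<bullet> (d - (a' - b'))" by (simp add: inner_diff_right)
          also have "\<bar>\<dots>\<bar> \<le> norm u * norm (d - (a' - b'))" by (rule Cauchy_Schwarz_ineq2)
          finally show ?thesis using nu a'b'(3) by simp
        qed
        then have "q u < (\<Sum>d\<in>B. e)" unfolding q_def using finB Bne by (intro sum_strict_mono) auto
        also have "\<dots> = m / 2" using cardpos by (simp add: e_def)
        finally have "q u < m / 2" .
        moreover have "m \<le> q u" using u0(2)[OF uK] m_def by simp
        ultimately show False using mpos by simp
      qed
    qed
  qed
qed

theorem lemma4p6:
  fixes G :: "'a::euclidean_space \<Rightarrow> ereal"
    and xs :: 'a and M :: "'a set" and U :: "'a set"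
    and Gt :: "'a \<Rightarrow> real" and gradGt :: "'a \<Rightarrow> 'a" and HessGt :: "'a \<Rightarrow> ('a \<Rightarrow>\<^sub>L 'a)"
  assumes "Gamma0 G"
    and "partly_smooth_affine G xs M"
    and "smooth_rep G M xs U Gt gradGt HessGt"
  defines "T \<equiv> Tmodel G xs"
  shows "(\<forall>\<epsilon>>0. \<forall>\<^sub>F h in at 0.
           norm (eG G (xs + proj T h) - eG G xs - proj T (HessGt xs (proj T h))) \<le> \<epsilon> * norm h)
         \<and> (\<forall>h. proj T (HessGt xs (proj T h)) \<bullet> h \<ge> 0)"
proof -
  define S0 where "S0 = subdiff G xs"
  define Ls where "Ls = Lin S0"
  have S0ne: "S0 \<noteq> {}" and xsM: "xs \<in> M" and img: "(\<lambda>y. y - xs) ` M = T"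
    and cont: "subdiff_cont_rel G xs M"
    using assms(2) by (auto simp: partly_smooth_affine_def S0_def T_def)
  have xsU: "xs \<in> U" and oU: "open U"
    and dGt: "\<And>y. y \<in> U \<Longrightarrow> (Gt has_derivative (\<lambda>v. gradGt y \<bullet> v)) (at y)"
    and dg: "\<And>y. y \<in> U \<Longrightarrow> (gradGt has_derivative blinfun_apply (HessGt y)) (at y)"
    and eq: "\<And>y. y \<in> M \<Longrightarrow> y \<in> U \<Longrightarrow> G y = ereal (Gt y)"
    using assms(3) by (auto simp: smooth_rep_def C2_on_def)
  have TL: "T = Ls\<^sup>\<bottom>" by (simp add: T_def Tmodel_def Ls_def S0_def)
  have sT: "subspace T" using TL subspace_orthogonal_comp by simp
  have sL: "subspace Ls" by (simp add: Ls_def Lin_def subspace_span)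
  have LT: "T\<^sup>\<bottom> = Ls" using TL orthogonal_comp_self[OF sL] by simp
  have MT: "\<And>y. y \<in> M \<longleftrightarrow> y - xs \<in> T"
  proof
    fix y assume "y \<in> M" then show "y - xs \<in> T" using img by blast
  next
    fix y assume "y - xs \<in> T"
    then obtain z where "z \<in> M" "z - xs = y - xs" using img by (metis imageE)
    then show "y \<in> M" by simp
  qed
  have A: "\<And>y v t. y \<in> M \<Longrightarrow> y \<in> U \<Longrightarrow> v \<in> subdiff G y \<Longrightarrow> t \<in> T \<Longrightarrow> (v - gradGt y) \<bullet> t = 0"
  proof -
    fix y v t assume a: "y \<in> M" "y \<in> U" "v \<in> subdiff G y" "t \<in> T"
    show "(v - gradGt y) \<bullet> t = 0"
      by (rule subgrad_tangent[where T=T and M=M and xs=xs and U=U and Gt=Gt and g=gradGt and G=G])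
        (fact sT, fact MT, fact oU, fact dGt, fact eq, fact a(1), fact a(2), fact a(3), fact a(4))
  qed
  define F where "F = inf (nhds xs) (principal M)"
  have inner: "eventually (\<lambda>y. \<exists>w\<in>subdiff G y. dist w v < e) F" if vS: "v \<in> S0" and ep: "e > 0" for v e
  proof -
    have c1: "\<forall>v\<in>S0. \<forall>\<epsilon>>0. \<exists>\<delta>>0. \<forall>y\<in>M. dist y xs < \<delta> \<longrightarrow> (\<exists>w\<in>subdiff G y. dist w v < \<epsilon>)"
      using cont unfolding subdiff_cont_rel_def S0_def by (rule conjunct1)
    obtain d where d: "d > 0" "\<forall>y\<in>M. dist y xs < d \<longrightarrow> (\<exists>w\<in>subdiff G y. dist w v < e)"
      using c1 vS ep by meson
    show ?thesis unfolding F_def eventually_inf_principal eventually_nhds_metric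
      by (rule exI[of _ d]) (use d in blast)
  qed
  obtain v0 where v0: "v0 \<in> S0" using S0ne by blast
  have ev: "eventually (\<lambda>y. y \<in> M \<and> y \<in> U \<and> subdiff G y \<noteq> {} \<and>
      (\<forall>w\<in>Ls. (\<forall>a\<in>subdiff G y. \<forall>b\<in>subdiff G y. w \<bullet> (a - b) = 0) \<longrightarrow> w = 0)) F"
  proof (intro eventually_conj)
    show "eventually (\<lambda>y. y \<in> M) F" unfolding F_def eventually_inf_principal by simp
    have "eventually (\<lambda>y. y \<in> U) (nhds xs)" using oU xsU by (rule eventually_nhds_in_open)
    then show "eventually (\<lambda>y. y \<in> U) F" unfolding F_def eventually_inf_principal
      by (rule eventually_mono) simp
    show "eventually (\<lambda>y. subdiff G y \<noteq> {}) F"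
      using inner[OF v0 zero_less_one] by (rule eventually_mono) blast
    show "eventually (\<lambda>y. \<forall>w\<in>Ls. (\<forall>a\<in>subdiff G y. \<forall>b\<in>subdiff G y. w \<bullet> (a - b) = 0) \<longrightarrow> w = 0) F"
      unfolding Ls_def by (rule perturb) (rule inner; assumption)
  qed
  have good: "eG G y = proj T (gradGt y)"
    if y: "y \<in> M" "y \<in> U" "subdiff G y \<noteq> {}"
      "\<forall>w\<in>Ls. (\<forall>a\<in>subdiff G y. \<forall>b\<in>subdiff G y. w \<bullet> (a - b) = 0) \<longrightarrow> w = 0" for y
  proof -
    define Sy where "Sy = subdiff G y"
    have sub1: "Lin Sy \<subseteq> Ls"
      unfolding Lin_def
    proof (rule span_minimal[OF _ sL], safe)
      fix a b assume ab: "a \<in> Sy" "b \<in> Sy"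
      have "orthogonal t (a - b)" if tT: "t \<in> T" for t
      proof -
        have "(a - gradGt y) \<bullet> t = 0" using A[OF y(1,2) _ tT] ab(1) Sy_def by blast
        moreover have "(b - gradGt y) \<bullet> t = 0" using A[OF y(1,2) _ tT] ab(2) Sy_def by blast
        ultimately have "(a - b) \<bullet> t = 0" by (simp add: inner_diff_left)
        then show ?thesis by (simp add: orthogonal_def inner_commute)
      qed
      then show "a - b \<in> Ls" using LT by (auto simp: orthogonal_comp_def)
    qed
    have sLy: "subspace (Lin Sy)" by (simp add: Lin_def subspace_span)
    have sub2: "Ls \<subseteq> Lin Sy"
    proof
      fix w assume w: "w \<in> Ls"
      define p where "p = proj (Lin Sy) w"
      have p: "p \<in> Lin Sy" using proj_in[OF sLy] p_def by simp
      have r: "w - p \<in> Ls" using w p sub1 sL by (auto intro: subspace_diff)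
      have "\<forall>a\<in>Sy. \<forall>b\<in>Sy. (w - p) \<bullet> (a - b) = 0"
      proof (intro ballI)
        fix a b assume "a \<in> Sy" "b \<in> Sy"
        then have "a - b \<in> Lin Sy" unfolding Lin_def by (intro span_base) blast
        then show "(w - p) \<bullet> (a - b) = 0" using proj_orth[OF sLy] p_def by blast
      qed
      then have "w - p = 0" using y(4) r Sy_def by blast
      then show "w \<in> Lin Sy" using p by simp
    qed
    have TY: "Tmodel G y = T" using sub1 sub2 TL by (simp add: Tmodel_def Sy_def)
    have "proj T ` Sy = {proj T (gradGt y)}"
    proof -
      have "proj T v = proj T (gradGt y)" if "v \<in> Sy" for v
      proof -
        have "proj T (v - gradGt y) = 0"
          using A[OF y(1,2)] that Sy_def by (intro proj_orth_zero[OF sT]) blast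
        then show ?thesis using proj_diff[OF sT] by simp
      qed
      note prj = this
      obtain v1 where v1: "v1 \<in> Sy" using y(3) Sy_def by blast
      show ?thesis
      proof (intro equalityI subsetI)
        fix x assume "x \<in> proj T ` Sy"
        then obtain v where "v \<in> Sy" "x = proj T v" by blast
        then show "x \<in> {proj T (gradGt y)}" using prj by simp
      next
        fix x assume "x \<in> {proj T (gradGt y)}"
        then have "x = proj T v1" using prj[OF v1] by simp
        then show "x \<in> proj T ` Sy" using v1 by blast
      qed
    qed
    then show ?thesis unfolding eG_def TY Sy_def by auto
  qed
  obtain \<delta> where \<delta>: "\<delta> > 0" "\<And>y. y \<in> M \<Longrightarrow> dist y xs < \<delta> \<Longrightarrow> y \<in> U \<and> subdiff G y \<noteq> {}
       \<and> eG G y = proj T (gradGt y)"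
  proof -
    have "eventually (\<lambda>y. y \<in> U \<and> subdiff G y \<noteq> {} \<and> eG G y = proj T (gradGt y)) F"
      using ev by (rule eventually_mono) (use good in blast)
    then show ?thesis using that unfolding F_def eventually_inf_principal eventually_nhds_metric by blast
  qed
  have gxs: "eG G xs = proj T (gradGt xs)" using \<delta> xsM by simp
  have part1: "\<forall>\<epsilon>>0. \<forall>\<^sub>F h in at 0.
           norm (eG G (xs + proj T h) - eG G xs - proj T (HessGt xs (proj T h))) \<le> \<epsilon> * norm h"
  proof (intro allI impI)
    fix \<epsilon> :: real assume "\<epsilon> > 0"
    then obtain d where d: "d > 0" "\<And>z. norm (z - xs) < d \<Longrightarrow>
        norm (gradGt z - gradGt xs - HessGt xs (z - xs)) \<le> \<epsilon> * norm (z - xs)"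
      using dg[OF xsU] unfolding has_derivative_at_alt by blast
    have "eventually (\<lambda>h. norm (eG G (xs + proj T h) - eG G xs - proj T (HessGt xs (proj T h)))
            \<le> \<epsilon> * norm h) (nhds 0)"
      unfolding eventually_nhds_metric
    proof (intro exI[of _ "min d \<delta>"] conjI allI impI)
      show "min d \<delta> > 0" using d \<delta> by simp
      fix h :: 'a assume h: "dist h 0 < min d \<delta>"
      define z where "z = xs + proj T h"
      have Ph: "norm (proj T h) \<le> norm h" by (rule proj_norm_le[OF sT])
      have zM: "z \<in> M" using MT proj_in[OF sT] z_def by simp
      have zd: "dist z xs < \<delta>" using h Ph by (simp add: z_def dist_norm)
      have ez: "eG G z = proj T (gradGt z)" using \<delta>(2)[OF zM zd] by simp
      have "eG G z - eG G xs - proj T (HessGt xs (proj T h))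
          = proj T (gradGt z - gradGt xs - HessGt xs (z - xs))"
        using ez gxs proj_diff[OF sT] by (simp add: z_def)
      then have "norm (eG G z - eG G xs - proj T (HessGt xs (proj T h)))
           \<le> norm (gradGt z - gradGt xs - HessGt xs (z - xs))"
        using proj_norm_le[OF sT] by simp
      also have "\<dots> \<le> \<epsilon> * norm (z - xs)" using d(2)[of z] h Ph by (simp add: z_def)
      also have "\<dots> \<le> \<epsilon> * norm h" using Ph \<open>\<epsilon> > 0\<close> by (simp add: z_def)
      finally show "norm (eG G (xs + proj T h) - eG G xs - proj T (HessGt xs (proj T h))) \<le> \<epsilon> * norm h"
        by (simp add: z_def)
    qed
    then show "\<forall>\<^sub>F h in at 0. norm (eG G (xs + proj T h) - eG G xs - proj T (HessGt xs (proj T h))) \<le> \<epsilon> * norm h"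
      unfolding eventually_at_filter by (rule eventually_mono) simp
  qed
  have part2: "HessGt xs t \<bullet> t \<ge> 0" if t: "t \<in> T" for t
  proof -
    define \<phi> where "\<phi> s = gradGt (xs + s *\<^sub>R t) \<bullet> t" for s
    have d1: "((\<lambda>s. xs + s *\<^sub>R t) has_derivative (\<lambda>s. s *\<^sub>R t)) (at 0)"
      by (auto intro!: derivative_eq_intros)
    have d2: "(gradGt has_derivative blinfun_apply (HessGt xs)) (at ((\<lambda>s. xs + s *\<^sub>R t) 0))"
      using dg[OF xsU] by simp
    have d3: "((\<lambda>s. gradGt (xs + s *\<^sub>R t)) has_derivative (\<lambda>s. HessGt xs (s *\<^sub>R t))) (at 0)"
      using diff_chain_at[OF d1 d2] by (simp add: o_def)
    have d4: "(\<phi> has_derivative (\<lambda>s. HessGt xs (s *\<^sub>R t) \<bullet> t)) (at 0)"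
      unfolding \<phi>_def by (rule bounded_linear.has_derivative[OF bounded_linear_inner_left d3])
    have "(\<lambda>s. HessGt xs (s *\<^sub>R t) \<bullet> t) = (*) (HessGt xs t \<bullet> t)"
      by (auto simp: blinfun.scaleR_right)
    then have "DERIV \<phi> 0 :> HessGt xs t \<bullet> t" using d4 by (simp add: has_field_derivative_def)
    then have l0: "((\<lambda>h. (\<phi> (0 + h) - \<phi> 0) / h) \<longlongrightarrow> HessGt xs t \<bullet> t) (at 0)"
      unfolding DERIV_def .
    have lim: "((\<lambda>s. (\<phi> s - \<phi> 0) / s) \<longlongrightarrow> HessGt xs t \<bullet> t) (at_right 0)"
      using tendsto_mono[OF at_within_le_at l0] by simp
    have "eventually (\<lambda>s. 0 \<le> (\<phi> s - \<phi> 0) / s) (at_right 0)"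
      unfolding eventually_at_right_field
    proof (intro exI[of _ "\<delta> / (norm t + 1)"] conjI allI impI)
      show "0 < \<delta> / (norm t + 1)" using \<delta>(1) by (intro divide_pos_pos) (auto intro: add_nonneg_pos)
      fix s :: real assume s: "0 < s" "s < \<delta> / (norm t + 1)"
      define y where "y = xs + s *\<^sub>R t"
      have yM: "y \<in> M" using MT t sT y_def by (simp add: subspace_scale)
      have "dist y xs = s * norm t" using s by (simp add: y_def dist_norm)
      also have "\<dots> \<le> s * (norm t + 1)" using s by simp
      also have "\<dots> < \<delta>" using s by (simp add: pos_less_divide_eq add_nonneg_pos)
      finally have yd: "dist y xs < \<delta>" .
      obtain yU: "y \<in> U" and yne: "subdiff G y \<noteq> {}" using \<delta>(2)[OF yM yd] by blast
      obtain w where w: "w \<in> subdiff G y" using yne by blast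
      have i1: "G xs + ereal (v0 \<bullet> (y - xs)) \<le> G y" using v0 unfolding S0_def subdiff_def by blast
      have i2: "G y + ereal (w \<bullet> (xs - y)) \<le> G xs" using w unfolding subdiff_def by blast
      have r1: "Gt xs + s * (v0 \<bullet> t) \<le> Gt y" using i1 eq[OF xsM xsU] eq[OF yM yU] by (simp add: y_def)
      have r2: "Gt y - s * (w \<bullet> t) \<le> Gt xs" using i2 eq[OF xsM xsU] eq[OF yM yU] by (simp add: y_def)
      have "s * ((w - v0) \<bullet> t) \<ge> 0" using r1 r2 by (simp add: inner_diff_left algebra_simps)
      then have wv: "(w - v0) \<bullet> t \<ge> 0" using s by (simp add: zero_le_mult_iff)
      have "(w - gradGt y) \<bullet> t = 0" using A[OF yM yU w t] .
      moreover have "(v0 - gradGt xs) \<bullet> t = 0" using A[OF xsM xsU _ t] v0 S0_def by blast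
      ultimately have "\<phi> s - \<phi> 0 \<ge> 0" using wv by (simp add: \<phi>_def y_def inner_diff_left)
      then show "0 \<le> (\<phi> s - \<phi> 0) / s" using s by simp
    qed
    then show ?thesis using tendsto_lowerbound[OF lim] by simp
  qed
  have "\<forall>h. proj T (HessGt xs (proj T h)) \<bullet> h \<ge> 0"
  proof
    fix h
    have "proj T (HessGt xs (proj T h)) \<bullet> h = HessGt xs (proj T h) \<bullet> proj T h" by (rule proj_sym[OF sT])
    then show "proj T (HessGt xs (proj T h)) \<bullet> h \<ge> 0" using part2[OF proj_in[OF sT]] by simp
  qed
  then show ?thesis using part1 by (intro conjI)
qed

end
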